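(* Let $\lambda>1$ and let $D_U,D_V$ be the $n\times n$ symmetric matrices $D_U=W_2^{-1}-W_2^{-1}B-B^TW_2^{-1}+B^TW_2^{-1}B$, $D_V=W_1^{-1}-A^TW_1^{-1}-W_1^{-1}A$, where $A=K_V^0(I+\Sigma_2)^{-1}$, $W_1=K_V^0-K_V^0(I+\Sigma_2)^{-1}K_V^0$, $B=K_U^0(K_U^0+\Sigma_1)^{-1}$, $W_2=K_U^0-K_U^0(K_U^0+\Sigma_1)^{-1}K_U^0$ for given symmetric positive definite $K_U^0,K_V^0,\Sigma_1,\Sigma_2$ with $K_U^0+K_V^0=I$. Consider the problem $$(\mathrm P)\quad\max_{\tilde q}\ \int\tilde q(u)\Big(-\tfrac12u^TD_Uu-\ln\tilde q(u)\Big)du+\lambda\int\tilde q(v)\Big(-\tfrac12v^TD_Vv-\ln\tilde q(v)\Big)dv\quad\text{s.t. } \mathbb E_{\tilde q(u,v)}[UU^T+VV^T]=I$$ over joint pdfs $\tilde q(u,v)$. Suppose an optimal solution of $(\mathrm P)$ has marginals $U\sim\mathcal N(0,K_U)$, $V\sim\mathcal N(0,K_V)$ with $K_U,K_V\succ0$ and $K_U+K_V=I$. Then $K_U$ is optimal for $$\max_{K_U}\ -\mathrm{tr}(D_UK_U)-\lambda\,\mathrm{tr}(D_V(I-K_U))+\ln|K_U|+\lambda\ln|I-K_U|\quad\text{s.t. } 0\prec K_U\prec I.$$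
   Context: $|M|$ denotes the determinant; $0\prec K_U\prec I$ means $K_U$ and $I-K_U$ are positive definite. *)

theory Defs
  imports "HOL-Analysis.Analysis"
begin

text \<open>Positive definiteness of a real square matrix (includes symmetry).\<close>
definition posdef :: "real^'n^'n \<Rightarrow> bool" where
  "posdef M \<longleftrightarrow> transpose M = M \<and> (\<forall>x. x \<noteq> 0 \<longrightarrow> x \<bullet> (M *v x) > 0)"

text \<open>Joint probability density function of (U,V) on R^n x R^n (w.r.t. Lebesgue measure).\<close>
definition joint_pdf :: "((real^'n) \<times> (real^'n) \<Rightarrow> real) \<Rightarrow> bool" where
  "joint_pdf q \<longleftrightarrow> q \<in> borel_measurable (lborel \<Otimes>\<^sub>M lborel) \<and> (\<forall>x. 0 \<le> q x)
     \<and> integrable (lborel \<Otimes>\<^sub>M lborel) q \<and> integral\<^sup>L (lborel \<Otimes>\<^sub>M lborel) q = 1"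

text \<open>Marginal densities of U and V.\<close>
definition margU :: "((real^'n) \<times> (real^'n) \<Rightarrow> real) \<Rightarrow> real^'n \<Rightarrow> real" where
  "margU q u = (\<integral>v. q (u, v) \<partial>lborel)"

definition margV :: "((real^'n) \<times> (real^'n) \<Rightarrow> real) \<Rightarrow> real^'n \<Rightarrow> real" where
  "margV q v = (\<integral>u. q (u, v) \<partial>lborel)"

text \<open>Integrand p(u) (-1/2 u^T D u - ln p(u)).\<close>
definition ent_integrand :: "real^'n^'n \<Rightarrow> (real^'n \<Rightarrow> real) \<Rightarrow> real^'n \<Rightarrow> real" where
  "ent_integrand D p u = p u * (- (1/2) * (u \<bullet> (D *v u)) - ln (p u))"

text \<open>Objective of problem (P).\<close>
definition objP :: "real^'n^'n \<Rightarrow> real^'n^'n \<Rightarrow> real \<Rightarrow> ((real^'n) \<times> (real^'n) \<Rightarrow> real) \<Rightarrow> real" where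
  "objP DU DV lam q = (\<integral>u. ent_integrand DU (margU q) u \<partial>lborel)
                      + lam * (\<integral>v. ent_integrand DV (margV q) v \<partial>lborel)"

text \<open>Feasible points of (P): joint pdfs for which the objective integrals exist and
  E[U U^T + V V^T] = I.\<close>
definition feasibleP :: "real^'n^'n \<Rightarrow> real^'n^'n \<Rightarrow> ((real^'n) \<times> (real^'n) \<Rightarrow> real) \<Rightarrow> bool" where
  "feasibleP DU DV q \<longleftrightarrow> joint_pdf q
     \<and> integrable lborel (ent_integrand DU (margU q))
     \<and> integrable lborel (ent_integrand DV (margV q))
     \<and> (\<forall>i j. integrable (lborel \<Otimes>\<^sub>M lborel) (\<lambda>(u,v). q (u,v) * (u$i * u$j + v$i * v$j))
        \<and> (\<integral>(u,v). q (u,v) * (u$i * u$j + v$i * v$j) \<partial>(lborel \<Otimes>\<^sub>M lborel)) = (if i = j then 1 else 0))"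

definition optimalP :: "real^'n^'n \<Rightarrow> real^'n^'n \<Rightarrow> real \<Rightarrow> ((real^'n) \<times> (real^'n) \<Rightarrow> real) \<Rightarrow> bool" where
  "optimalP DU DV lam q \<longleftrightarrow> feasibleP DU DV q
     \<and> (\<forall>q'. feasibleP DU DV q' \<longrightarrow> objP DU DV lam q' \<le> objP DU DV lam q)"

text \<open>Density of the centred Gaussian N(0,K) on R^n.\<close>
definition gaussian_pdf :: "real^'n^'n \<Rightarrow> real^'n \<Rightarrow> real" where
  "gaussian_pdf K u = exp (- (1/2) * (u \<bullet> (matrix_inv K *v u)))
                       / sqrt ((2 * pi) ^ CARD('n) * det K)"

text \<open>Objective of the matrix problem.\<close>
definition objK :: "real^'n^'n \<Rightarrow> real^'n^'n \<Rightarrow> real \<Rightarrow> real^'n^'n \<Rightarrow> real" where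
  "objK DU DV lam K = - trace (DU ** K) - lam * trace (DV ** (mat 1 - K))
                      + ln (det K) + lam * ln (det (mat 1 - K))"

end

theory Submission
  imports Defs "HOL-Probability.Distributions"
begin

lemma Basis_vec_range: "(Basis :: (real^'n) set) = range (\<lambda>i. axis i 1)"
  by (auto simp: Basis_vec_def)

lemma prod_Basis_vec: "(\<Prod>b\<in>(Basis :: (real^'n) set). g b) = (\<Prod>i\<in>UNIV. g (axis i (1::real)))"
  unfolding Basis_vec_range by (subst prod.reindex) (auto simp: inj_on_def axis_eq_axis)

lemma sum_Basis_vec: "(\<Sum>b\<in>(Basis :: (real^'n) set). g b) = (\<Sum>i\<in>UNIV. g (axis i (1::real)))"
  unfolding Basis_vec_range by (subst sum.reindex) (auto simp: inj_on_def axis_eq_axis)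

lemma linear_meas: fixes f :: "'a::euclidean_space \<Rightarrow> 'b::euclidean_space"
  shows "linear f \<Longrightarrow> f \<in> borel_measurable borel"
  by (intro borel_measurable_continuous_onI) (simp add: linear_continuous_on linear_conv_bounded_linear)

lemma cv_const:
  fixes c :: "'n::finite \<Rightarrow> real" and h :: "real^'n \<Rightarrow> ennreal"
  assumes "det (matrix (\<lambda>x::real^'n. \<chi> i. c i * x$i)) \<noteq> 0" and [measurable]: "h \<in> borel_measurable borel"
  shows "(\<integral>\<^sup>+x. h (\<chi> i. c i * x$i) * ennreal \<bar>det (matrix (\<lambda>x::real^'n. \<chi> i. c i * x$i))\<bar> \<partial>lborel) = (\<integral>\<^sup>+x. h x \<partial>lborel)"
proof -
  have mat: "matrix (\<lambda>x::real^'n. \<chi> i. c i * x$i) = (\<chi> i j. if i = j then c i else 0)"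
    by (simp add: matrix_def vec_eq_iff axis_def)
  have det: "det (matrix (\<lambda>x::real^'n. \<chi> i. c i * x$i)) = (\<Prod>i\<in>UNIV. c i)"
    unfolding mat by (subst det_diagonal) auto
  have lin: "linear (\<lambda>x::real^'n. \<chi> i. c i * x$i)"
    by (rule linearI) (auto simp: vec_eq_iff algebra_simps)
  have [measurable]: "(\<lambda>x::real^'n. \<chi> i. c i * x$i) \<in> borel_measurable borel"
    using lin by (rule linear_meas)
  have c0: "\<And>i. c i \<noteq> 0" using assms(1) unfolding det by auto
  define c' where "c' b = c (axis_index b)" for b :: "real^'n"
  have T: "(\<lambda>x::real^'n. 0 + (\<Sum>j\<in>Basis. (c' j * (x \<bullet> j)) *\<^sub>R j)) = (\<lambda>x. \<chi> i. c i * x$i)"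
    using vec_lambda_eq_sum[of "\<lambda>k y. c k * y"] by (auto simp: c'_def)
  have cb: "\<And>j. j \<in> (Basis :: (real^'n) set) \<Longrightarrow> c' j \<noteq> 0" using c0 by (simp add: c'_def)
  have P: "(\<Prod>j\<in>(Basis :: (real^'n) set). \<bar>c' j\<bar>) = \<bar>\<Prod>i\<in>UNIV. c i\<bar>"
    by (simp add: prod_Basis_vec c'_def abs_prod)
  have "(\<integral>\<^sup>+x. h x \<partial>lborel) = (\<integral>\<^sup>+x. h x \<partial>(density (distr lborel borel (\<lambda>x::real^'n. \<chi> i. c i * x$i)) (\<lambda>_. \<bar>\<Prod>i\<in>UNIV. c i\<bar>)))"
    using lborel_affine_euclidean[where c=c' and t=0, OF cb] unfolding T P by simp
  also have "\<dots> = (\<integral>\<^sup>+x. ennreal \<bar>\<Prod>i\<in>UNIV. c i\<bar> * h (\<chi> i. c i * x$i) \<partial>lborel)"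
    by (subst nn_integral_density) (auto simp: nn_integral_distr intro!: nn_integral_distr)
  finally show ?thesis unfolding det by (simp add: mult.commute)
qed

lemma cv_swap:
  fixes m n :: "'n::finite" and h :: "real^'n \<Rightarrow> ennreal"
  assumes [measurable]: "h \<in> borel_measurable borel"
  defines "p \<equiv> Transposition.transpose m n"
  shows "(\<integral>\<^sup>+x. h (\<chi> i. x $ p i) * ennreal \<bar>det (matrix (\<lambda>x::real^'n. \<chi> i. x $ p i))\<bar> \<partial>lborel) = (\<integral>\<^sup>+x. h x \<partial>lborel)"
proof -
  have pp: "p permutes UNIV" unfolding p_def by (simp add: permutes_swap_id)
  have inv: "\<And>i. p (p i) = i" unfolding p_def by simp
  have lin: "linear (\<lambda>x::real^'n. \<chi> i. x $ p i)"
    by (rule linearI) (auto simp: vec_eq_iff algebra_simps)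
  have [measurable]: "(\<lambda>x::real^'n. \<chi> i. x $ p i) \<in> borel_measurable borel"
    using lin by (rule linear_meas)
  have mat: "matrix (\<lambda>x::real^'n. \<chi> i. x $ p i) = (\<chi> i. (mat 1 :: real^'n^'n) $ p i)"
    by (simp add: matrix_def vec_eq_iff axis_def mat_def)
  have det: "\<bar>det (matrix (\<lambda>x::real^'n. \<chi> i. x $ p i))\<bar> = 1"
    unfolding mat by (subst det_permute_rows[OF pp]) (simp add: sign_def)
  have "lborel = distr lborel borel (\<lambda>x::real^'n. \<chi> i. x $ p i)"
  proof (rule lborel_eqI)
    fix l u :: "real^'n" assume le: "\<And>b. b \<in> Basis \<Longrightarrow> l \<bullet> b \<le> u \<bullet> b"
    have le': "\<And>i. l $ i \<le> u $ i" proof -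
      fix i have "l \<bullet> axis i 1 \<le> u \<bullet> axis i 1" by (rule le) (auto simp: Basis_vec_def)
      then show "l $ i \<le> u $ i" by (simp add: inner_axis)
    qed
    have pre: "(\<lambda>x::real^'n. \<chi> i. x $ p i) -` box l u = box (\<chi> i. l $ p i) (\<chi> i. u $ p i)"
      apply (auto simp: mem_box_cart)
      by (metis inv)+
    have "emeasure (distr lborel borel (\<lambda>x::real^'n. \<chi> i. x $ p i)) (box l u) =
       emeasure lborel (box (\<chi> i. l $ p i) (\<chi> i. u $ p i :: real^'n))"
      by (subst emeasure_distr) (auto simp: pre)
    also have "\<dots> = (\<Prod>i\<in>UNIV. ennreal (u $ p i - l $ p i))"
    proof -
      have "\<forall>b\<in>Basis. (\<chi> i. l $ p i) \<bullet> b \<le> (\<chi> i. u $ p i :: real^'n) \<bullet> b"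
        using le' by (auto simp: Basis_vec_def inner_axis)
      then show ?thesis using le'
        by (subst emeasure_lborel_box_eq) (simp add: prod_Basis_vec inner_axis prod_ennreal)
    qed
    also have "\<dots> = (\<Prod>i\<in>UNIV. ennreal (u $ i - l $ i))"
      using prod.permute[OF pp, of "\<lambda>i. ennreal (u $ i - l $ i)"] by (simp add: o_def)
    also have "\<dots> = (\<Prod>b\<in>Basis. ennreal ((u - l) \<bullet> b))"
      by (simp add: prod_Basis_vec inner_axis)
    finally show "emeasure (distr lborel borel (\<lambda>x::real^'n. \<chi> i. x $ p i)) (box l u) = (\<Prod>b\<in>Basis. (u - l) \<bullet> b)"
      using le by (simp add: prod_ennreal inner_diff_left)
  qed simp
  then have "(\<integral>\<^sup>+x. h x \<partial>lborel) = (\<integral>\<^sup>+x. h x \<partial>distr lborel borel (\<lambda>x::real^'n. \<chi> i. x $ p i))" by simp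
  also have "\<dots> = (\<integral>\<^sup>+x. h (\<chi> i. x $ p i) \<partial>lborel)" by (simp add: nn_integral_distr)
  finally show ?thesis by (simp add: det)
qed

lemma cv_idplus:
  fixes m n :: "'n::finite" and h :: "real^'n \<Rightarrow> ennreal"
  assumes [measurable]: "h \<in> borel_measurable borel" and mn: "m \<noteq> n"
  shows "(\<integral>\<^sup>+x. h (\<chi> i. if i = m then x$m + x$n else x$i) * ennreal \<bar>det (matrix (\<lambda>x::real^'n. \<chi> i. if i = m then x$m + x$n else x$i))\<bar> \<partial>lborel) = (\<integral>\<^sup>+x. h x \<partial>lborel)"
proof -
  define f where "f = (\<lambda>x::real^'n. \<chi> i. if i = m then x$m + x$n else x$i)"
  have lin: "linear f"
    unfolding f_def by (rule linearI) (auto simp: vec_eq_iff algebra_simps)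
  have [measurable]: "f \<in> borel_measurable borel"
    using lin by (rule linear_meas)
  have mat: "matrix f = (\<chi> k. if k = m then row m (mat 1) + 1 *s row n (mat 1) else row k (mat 1 :: real^'n^'n))"
    using mn by (simp add: f_def matrix_def vec_eq_iff axis_def mat_def row_def)
  have det: "det (matrix f) = 1"
    unfolding mat by (subst det_row_operation[OF mn]) simp
  define bm where "bm = (axis m 1 :: real^'n)"
  have fx: "f z = z + (z$n) *\<^sub>R bm" for z
    using mn by (auto simp: f_def bm_def vec_eq_iff axis_def)
  have bmB: "bm \<in> Basis" by (auto simp: bm_def Basis_vec_def)
  define I where "I = Basis - {bm}"
  have BI: "Basis = insert bm I" "bm \<notin> I" "finite I" using bmB by (auto simp: I_def)
  interpret product_sigma_finite "\<lambda>_::real^'n. lborel::real measure"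
    by standard
  have sumF: "(\<Sum>b\<in>Basis. (x(bm:=y)) b *\<^sub>R b) = (\<Sum>b\<in>I. x b *\<^sub>R b) + y *\<^sub>R bm" for x :: "real^'n \<Rightarrow> real" and y
  proof -
    have "(\<Sum>b\<in>Basis. (x(bm:=y)) b *\<^sub>R b) = (\<Sum>b\<in>insert bm I. (x(bm:=y)) b *\<^sub>R b)" using BI by simp
    also have "\<dots> = y *\<^sub>R bm + (\<Sum>b\<in>I. (x(bm:=y)) b *\<^sub>R b)" using BI by (subst sum.insert) auto
    also have "(\<Sum>b\<in>I. (x(bm:=y)) b *\<^sub>R b) = (\<Sum>b\<in>I. x b *\<^sub>R b)"
      using BI by (intro sum.cong) auto
    finally show ?thesis by simp
  qed
  have gen: "(\<integral>\<^sup>+x. g x \<partial>lborel) = (\<integral>\<^sup>+x. (\<integral>\<^sup>+y. g ((\<Sum>b\<in>I. x b *\<^sub>R b) + y *\<^sub>R bm) \<partial>lborel) \<partial>Pi\<^sub>M I (\<lambda>_. lborel))"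
    if [measurable]: "g \<in> borel_measurable borel" for g :: "real^'n \<Rightarrow> ennreal"
  proof -
    have "(\<integral>\<^sup>+x. g x \<partial>lborel) = (\<integral>\<^sup>+F. g (\<Sum>b\<in>Basis. F b *\<^sub>R b) \<partial>Pi\<^sub>M Basis (\<lambda>_. lborel))"
      apply (subst lborel_eq)
      apply (subst nn_integral_distr)
        apply measurable
      done
    also have "\<dots> = (\<integral>\<^sup>+F. g (\<Sum>b\<in>Basis. F b *\<^sub>R b) \<partial>Pi\<^sub>M (insert bm I) (\<lambda>_. lborel))"
      using BI by simp
    also have "\<dots> = (\<integral>\<^sup>+x. (\<integral>\<^sup>+y. g (\<Sum>b\<in>Basis. (x(bm:=y)) b *\<^sub>R b) \<partial>lborel) \<partial>Pi\<^sub>M I (\<lambda>_. lborel))"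
      by (rule product_nn_integral_insert) (use BI in auto)
    finally show ?thesis by (simp only: sumF)
  qed
  have "(\<integral>\<^sup>+x. h (f x) \<partial>lborel) = (\<integral>\<^sup>+x. h x \<partial>lborel)"
  proof -
    have "(\<integral>\<^sup>+x. h (f x) \<partial>lborel) = (\<integral>\<^sup>+x. (\<integral>\<^sup>+y. h (f ((\<Sum>b\<in>I. x b *\<^sub>R b) + y *\<^sub>R bm)) \<partial>lborel) \<partial>Pi\<^sub>M I (\<lambda>_. lborel))"
      by (rule gen) simp
    also have "\<dots> = (\<integral>\<^sup>+x. (\<integral>\<^sup>+y. h ((\<Sum>b\<in>I. x b *\<^sub>R b) + y *\<^sub>R bm) \<partial>lborel) \<partial>Pi\<^sub>M I (\<lambda>_. lborel))"
    proof (rule nn_integral_cong)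
      fix x :: "real^'n \<Rightarrow> real"
      define v where "v = (\<Sum>b\<in>I. x b *\<^sub>R b)"
      have bmn: "bm $ n = 0" using mn by (simp add: bm_def axis_def)
      have "(\<integral>\<^sup>+y. h (f (v + y *\<^sub>R bm)) \<partial>lborel) = (\<integral>\<^sup>+y. h (v + (v$n + y) *\<^sub>R bm) \<partial>lborel)"
        by (simp add: fx bmn algebra_simps)
      also have "\<dots> = (\<integral>\<^sup>+y. h (v + y *\<^sub>R bm) \<partial>lborel)"
        using nn_integral_real_affine[of "\<lambda>y. h (v + y *\<^sub>R bm)" 1 "v$n"] by simp
      finally show "(\<integral>\<^sup>+y. h (f ((\<Sum>b\<in>I. x b *\<^sub>R b) + y *\<^sub>R bm)) \<partial>lborel) = (\<integral>\<^sup>+y. h ((\<Sum>b\<in>I. x b *\<^sub>R b) + y *\<^sub>R bm) \<partial>lborel)"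
        by (simp add: v_def)
    qed
    also have "\<dots> = (\<integral>\<^sup>+x. h x \<partial>lborel)"
      by (rule gen[symmetric]) simp
    finally show ?thesis .
  qed
  then show ?thesis using det by (simp add: f_def)
qed

lemma cv_linear:
  fixes f :: "real^'n::finite \<Rightarrow> real^'n"
  assumes "linear f" "det (matrix f) \<noteq> 0" and hm: "h \<in> borel_measurable borel"
  shows "(\<integral>\<^sup>+x. h (f x) * ennreal \<bar>det (matrix f)\<bar> \<partial>lborel) = (\<integral>\<^sup>+x. h x \<partial>lborel)"
proof -
  have "\<forall>h. h \<in> borel_measurable borel \<longrightarrow> det (matrix f) \<noteq> 0 \<longrightarrow>
     (\<integral>\<^sup>+x. h (f x) * ennreal \<bar>det (matrix f)\<bar> \<partial>lborel) = (\<integral>\<^sup>+x. h x \<partial>lborel)"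
  proof (rule induct_linear_elementary[OF assms(1)])
    fix f g :: "real^'n \<Rightarrow> real^'n"
    assume lf: "linear f" and lg: "linear g"
      and Pf: "\<forall>h. h \<in> borel_measurable borel \<longrightarrow> det (matrix f) \<noteq> 0 \<longrightarrow>
     (\<integral>\<^sup>+x. h (f x) * ennreal \<bar>det (matrix f)\<bar> \<partial>lborel) = (\<integral>\<^sup>+x. h x \<partial>lborel)"
      and Pg: "\<forall>h. h \<in> borel_measurable borel \<longrightarrow> det (matrix g) \<noteq> 0 \<longrightarrow>
     (\<integral>\<^sup>+x. h (g x) * ennreal \<bar>det (matrix g)\<bar> \<partial>lborel) = (\<integral>\<^sup>+x. h x \<partial>lborel)"
    show "\<forall>h. h \<in> borel_measurable borel \<longrightarrow> det (matrix (f \<circ> g)) \<noteq> 0 \<longrightarrow>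
     (\<integral>\<^sup>+x. h ((f \<circ> g) x) * ennreal \<bar>det (matrix (f \<circ> g))\<bar> \<partial>lborel) = (\<integral>\<^sup>+x. h x \<partial>lborel)"
    proof (intro allI impI)
      fix h :: "real^'n \<Rightarrow> ennreal" assume hm: "h \<in> borel_measurable borel" and d: "det (matrix (f \<circ> g)) \<noteq> 0"
      have dd: "det (matrix (f \<circ> g)) = det (matrix f) * det (matrix g)"
        by (simp add: matrix_compose[OF lg lf] det_mul)
      have df: "det (matrix f) \<noteq> 0" and dg: "det (matrix g) \<noteq> 0" using d dd by auto
      have fm: "f \<in> borel_measurable borel" using lf by (rule linear_meas)
      have hf: "(\<lambda>y. h (f y) * ennreal \<bar>det (matrix f)\<bar>) \<in> borel_measurable borel"
        using hm fm by measurable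
      have "(\<integral>\<^sup>+x. h ((f \<circ> g) x) * ennreal \<bar>det (matrix (f \<circ> g))\<bar> \<partial>lborel)
          = (\<integral>\<^sup>+x. (h (f (g x)) * ennreal \<bar>det (matrix f)\<bar>) * ennreal \<bar>det (matrix g)\<bar> \<partial>lborel)"
        by (simp add: dd abs_mult ennreal_mult mult.assoc)
      also have "\<dots> = (\<integral>\<^sup>+y. h (f y) * ennreal \<bar>det (matrix f)\<bar> \<partial>lborel)"
        using Pg hf dg by auto
      also have "\<dots> = (\<integral>\<^sup>+x. h x \<partial>lborel)"
        using Pf hm df by auto
      finally show "(\<integral>\<^sup>+x. h ((f \<circ> g) x) * ennreal \<bar>det (matrix (f \<circ> g))\<bar> \<partial>lborel) = (\<integral>\<^sup>+x. h x \<partial>lborel)" .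
    qed
  next
    fix f :: "real^'n \<Rightarrow> real^'n" and i
    assume "linear f" "\<And>x. f x $ i = 0"
    then have "row i (matrix f) = 0" by (simp add: matrix_def row_def vec_eq_iff)
    then have "det (matrix f) = 0" by (metis det_zero_row row_def vec_lambda_eta)
    then show "\<forall>h. h \<in> borel_measurable borel \<longrightarrow> det (matrix f) \<noteq> 0 \<longrightarrow>
     (\<integral>\<^sup>+x. h (f x) * ennreal \<bar>det (matrix f)\<bar> \<partial>lborel) = (\<integral>\<^sup>+x. h x \<partial>lborel)" by simp
  next
    fix c :: "'n \<Rightarrow> real"
    show "\<forall>h. h \<in> borel_measurable borel \<longrightarrow> det (matrix (\<lambda>x::real^'n. \<chi> i. c i * x$i)) \<noteq> 0 \<longrightarrow>
     (\<integral>\<^sup>+x. h (\<chi> i. c i * x$i) * ennreal \<bar>det (matrix (\<lambda>x::real^'n. \<chi> i. c i * x$i))\<bar> \<partial>lborel) = (\<integral>\<^sup>+x. h x \<partial>lborel)"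
      by (intro allI impI, rule cv_const)
  next
    fix m n :: 'n assume "m \<noteq> n"
    show "\<forall>h. h \<in> borel_measurable borel \<longrightarrow> det (matrix (\<lambda>x::real^'n. \<chi> i. x $ Transposition.transpose m n i)) \<noteq> 0 \<longrightarrow>
     (\<integral>\<^sup>+x. h (\<chi> i. (x::real^'n) $ Transposition.transpose m n i) * ennreal \<bar>det (matrix (\<lambda>x::real^'n. \<chi> i. x $ Transposition.transpose m n i))\<bar> \<partial>lborel) = (\<integral>\<^sup>+x. h x \<partial>lborel)"
      by (intro allI impI, rule cv_swap)
  next
    fix m n :: 'n assume "m \<noteq> n"
    show "\<forall>h. h \<in> borel_measurable borel \<longrightarrow> det (matrix (\<lambda>x::real^'n. \<chi> i. if i = m then x$m + x$n else x$i)) \<noteq> 0 \<longrightarrow>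
     (\<integral>\<^sup>+x. h (\<chi> i. if i = m then (x::real^'n)$m + x$n else x$i) * ennreal \<bar>det (matrix (\<lambda>x::real^'n. \<chi> i. if i = m then x$m + x$n else x$i))\<bar> \<partial>lborel) = (\<integral>\<^sup>+x. h x \<partial>lborel)"
      by (intro allI impI, rule cv_idplus, assumption, rule \<open>m \<noteq> n\<close>)
  qed
  then show ?thesis using assms by blast
qed



lemma sumS_component: "(\<Sum>b\<in>(Basis::(real^'n::finite) set). F b *\<^sub>R b) $ i = F (axis i 1)"
  by (simp add: sum_Basis_vec axis_def if_distrib cong: if_cong)

lemma lborel_prod_integral:
  fixes h :: "'n::finite \<Rightarrow> real \<Rightarrow> real"
  assumes int: "\<And>i. integrable lborel (h i)"
  shows "integrable lborel (\<lambda>z::real^'n. \<Prod>i\<in>UNIV. h i (z$i))"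
    and "(\<integral>z. (\<Prod>i\<in>UNIV. h i ((z::real^'n)$i)) \<partial>lborel) = (\<Prod>i\<in>UNIV. integral\<^sup>L lborel (h i))"
proof -
  interpret product_sigma_finite "\<lambda>_::real^'n. lborel::real measure"
    by standard
  have hm[measurable]: "\<And>i. h i \<in> borel_measurable borel" using int by (simp add: borel_measurable_integrable)
  define h' where "h' b = h (axis_index b)" for b :: "real^'n"
  have Gm[measurable]: "(\<lambda>z::real^'n. \<Prod>i\<in>UNIV. h i (z$i)) \<in> borel_measurable borel"
    by measurable
  have Sm[measurable]: "(\<lambda>F. \<Sum>b\<in>(Basis::(real^'n) set). F b *\<^sub>R b) \<in> Pi\<^sub>M Basis (\<lambda>_. lborel) \<rightarrow>\<^sub>M borel"
    by measurable
  have GS: "(\<Prod>i\<in>UNIV. h i ((\<Sum>b\<in>(Basis::(real^'n) set). F b *\<^sub>R b)$i)) = (\<Prod>b\<in>Basis. h' b (F b))" for F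
    unfolding sumS_component by (simp add: prod_Basis_vec h'_def)
  have int': "\<And>b. b \<in> Basis \<Longrightarrow> integrable lborel (h' b)" using int by (simp add: h'_def)
  have PB: "(\<Prod>b\<in>(Basis::(real^'n) set). integral\<^sup>L lborel (h' b)) = (\<Prod>i\<in>UNIV. integral\<^sup>L lborel (h i))"
    by (simp add: prod_Basis_vec h'_def)
  show "integrable lborel (\<lambda>z::real^'n. \<Prod>i\<in>UNIV. h i (z$i))"
    apply (subst lborel_eq)
    apply (subst integrable_distr_eq[OF Sm Gm])
    unfolding GS
    by (rule product_integrable_prod) (auto intro: int')
  show "(\<integral>z. (\<Prod>i\<in>UNIV. h i ((z::real^'n)$i)) \<partial>lborel) = (\<Prod>i\<in>UNIV. integral\<^sup>L lborel (h i))"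
    apply (subst lborel_eq)
    apply (subst integral_distr[OF Sm Gm])
    unfolding GS PB[symmetric]
    by (rule product_integral_prod) (auto intro: int')
qed

definition Phi :: "real^'n::finite \<Rightarrow> real" where
  "Phi z = (\<Prod>i\<in>UNIV. std_normal_density (z$i))"

lemma Phi_pos: "Phi z > 0"
  unfolding Phi_def by (intro prod_pos) (simp add: std_normal_density_def)

lemma Phi_alt: fixes z :: "real^'n::finite" shows "Phi z = exp (- (z \<bullet> z) / 2) / sqrt (2*pi) ^ CARD('n)"
proof -
  have "Phi z = (\<Prod>i\<in>UNIV. exp (- ((z$i)^2) / 2) / sqrt (2*pi))"
    unfolding Phi_def std_normal_density_def by simp
  also have "\<dots> = (\<Prod>i\<in>UNIV. exp (- ((z$i)^2) / 2)) / (\<Prod>i\<in>(UNIV::'n set). sqrt (2*pi))"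
    by (rule prod_dividef)
  also have "(\<Prod>i\<in>UNIV. exp (- ((z$i)^2) / 2)) = exp (\<Sum>i\<in>UNIV. - ((z$i)^2) / 2)"
    by (simp add: exp_sum)
  also have "(\<Sum>i\<in>UNIV. - ((z$i)^2) / 2) = - (z \<bullet> z) / 2"
    by (simp add: inner_vec_def power2_eq_square sum_divide_distrib[symmetric] sum_negf)
  finally show ?thesis by simp
qed

lemma Phi_meas[measurable]: "Phi \<in> borel_measurable borel"
  unfolding Phi_def by measurable

lemma std_mom:
  assumes "j \<le> 2"
  shows "integral\<^sup>L lborel (\<lambda>t. std_normal_density t * t^j) = (if j = 1 then 0 else 1)"
proof -
  have "j = 0 \<or> j = 1 \<or> j = 2" using assms by auto
  moreover have "integral\<^sup>L lborel (\<lambda>t. std_normal_density t * t^0) = 1"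
    using integral_std_normal_moment_even[of 0] by simp
  moreover have "integral\<^sup>L lborel (\<lambda>t. std_normal_density t * t^1) = 0"
    using integral_std_normal_moment_odd[of 0] by simp
  moreover have "integral\<^sup>L lborel (\<lambda>t. std_normal_density t * t^2) = 1"
    using integral_std_normal_moment_even[of 1] by simp
  ultimately show ?thesis by auto
qed

lemma Phi_integrable: "integrable lborel (Phi :: real^'n::finite \<Rightarrow> real)"
  and Phi_integral: "(\<integral>z. Phi (z::real^'n::finite) \<partial>lborel) = 1"
proof -
  have i: "\<And>i::'n. integrable lborel (\<lambda>t. std_normal_density t)"
    using integrable_std_normal_moment[of 0] by simp
  show "integrable lborel (Phi :: real^'n::finite \<Rightarrow> real)"
    using lborel_prod_integral(1)[of "\<lambda>_. std_normal_density", OF i] unfolding Phi_def .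
  have "(\<integral>z. Phi (z::real^'n::finite) \<partial>lborel) = (\<Prod>i\<in>(UNIV::'n set). integral\<^sup>L lborel std_normal_density)"
    using lborel_prod_integral(2)[of "\<lambda>_. std_normal_density", OF i] unfolding Phi_def .
  also have "integral\<^sup>L lborel std_normal_density = 1"
    using std_mom[of 0] by simp
  finally show "(\<integral>z. Phi (z::real^'n::finite) \<partial>lborel) = 1" by simp
qed

lemma Phi_moment2:
  fixes k l :: "'n::finite"
  shows "integrable lborel (\<lambda>z::real^'n. Phi z * (z$k * z$l))"
    and "(\<integral>z. Phi (z::real^'n) * (z$k * z$l) \<partial>lborel) = (if k = l then 1 else 0)"
proof -
  define e where "e i = (if i = k then 1 else 0) + (if i = l then 1 else (0::nat))" for i
  define h where "h i t = std_normal_density t * t ^ (e i)" for i t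
  have i: "\<And>i. integrable lborel (h i)" unfolding h_def by (rule integrable_std_normal_moment)
  have pr: "(\<Prod>i\<in>UNIV. h i (z$i)) = Phi z * (z$k * z$l)" for z :: "real^'n"
  proof -
    have "(\<Prod>i\<in>UNIV. h i (z$i)) = Phi z * ((\<Prod>i\<in>UNIV. (z$i) ^ (if i = k then 1 else 0)) * (\<Prod>i\<in>UNIV. (z$i) ^ (if i = l then 1 else 0)))"
      by (simp add: h_def e_def Phi_def prod.distrib power_add)
    also have "(\<Prod>i\<in>UNIV. (z$i) ^ (if i = k then 1 else 0)) = z$k"
      by (simp add: if_distrib[of "\<lambda>n. _ ^ n"] prod.delta cong: if_cong)
    also have "(\<Prod>i\<in>UNIV. (z$i) ^ (if i = l then 1 else 0)) = z$l"
      by (simp add: if_distrib[of "\<lambda>n. _ ^ n"] prod.delta cong: if_cong)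
    finally show ?thesis .
  qed
  show "integrable lborel (\<lambda>z::real^'n. Phi z * (z$k * z$l))"
    using lborel_prod_integral(1)[of h, OF i] unfolding pr .
  have "(\<integral>z. Phi (z::real^'n) * (z$k * z$l) \<partial>lborel) = (\<Prod>i\<in>UNIV. integral\<^sup>L lborel (h i))"
    using lborel_prod_integral(2)[of h, OF i] unfolding pr .
  also have "\<dots> = (\<Prod>i\<in>UNIV. if e i = 1 then 0 else 1)"
    unfolding h_def by (intro prod.cong refl std_mom) (simp add: e_def)
  also have "\<dots> = (if k = l then 1 else 0)"
  proof (cases "k = l")
    case True
    then have "\<And>i. e i \<noteq> 1" by (simp add: e_def)
    then show ?thesis using True by simp
  next
    case False
    then have "e k = 1" by (simp add: e_def)
    then have "(\<Prod>i\<in>UNIV. if e i = 1 then 0 else (1::real)) = 0"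
      by (intro prod_zero) auto
    then show ?thesis using False by simp
  qed
  finally show "(\<integral>z. Phi (z::real^'n) * (z$k * z$l) \<partial>lborel) = (if k = l then 1 else 0)" .
qed



lemma posdef_sym_ip:
  fixes K :: "real^'n::finite^'n"
  assumes "transpose K = K"
  shows "x \<bullet> (K *v y) = y \<bullet> (K *v x)"
proof -
  have "x \<bullet> (K *v y) = (x v* K) \<bullet> y" by (simp add: dot_lmul_matrix)
  also have "x v* K = transpose K *v x" by simp
  finally show ?thesis using assms by (simp add: inner_commute)
qed

lemma gram_schmidt_K:
  fixes K :: "real^'n::finite^'n"
  assumes pd: "posdef K" and fin: "finite X"
  shows "\<exists>C. finite C \<and> span C = span X \<and> (\<forall>c\<in>C. c \<bullet> (K *v c) = 1)
            \<and> (\<forall>c\<in>C. \<forall>d\<in>C. c \<noteq> d \<longrightarrow> c \<bullet> (K *v d) = 0)"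
  using fin
proof (induction X rule: finite_induct)
  case empty
  show ?case by (intro exI[of _ "{}"]) simp
next
  case (insert x X)
  then obtain C where C: "finite C" "span C = span X" "\<forall>c\<in>C. c \<bullet> (K *v c) = 1"
    "\<forall>c\<in>C. \<forall>d\<in>C. c \<noteq> d \<longrightarrow> c \<bullet> (K *v d) = 0" by blast
  have sym: "transpose K = K" and pos: "\<And>v. v \<noteq> 0 \<Longrightarrow> v \<bullet> (K *v v) > 0"
    using pd by (auto simp: posdef_def)
  show ?case
  proof (cases "x \<in> span C")
    case True
    then have "x \<in> span X" using C by simp
    then have "span (insert x X) = span X" by (rule span_redundant)
    then show ?thesis using C by auto
  next
    case False
    define y where "y = x - (\<Sum>c\<in>C. (x \<bullet> (K *v c)) *\<^sub>R c)"
    have sC: "(\<Sum>c\<in>C. (x \<bullet> (K *v c)) *\<^sub>R c) \<in> span C"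
      by (intro span_sum span_scale span_base)
    have y0: "y \<noteq> 0"
    proof
      assume "y = 0"
      then have "x = (\<Sum>c\<in>C. (x \<bullet> (K *v c)) *\<^sub>R c)" by (simp add: y_def)
      with sC False show False by simp
    qed
    have yd: "y \<bullet> (K *v d) = 0" if d: "d \<in> C" for d
    proof -
      have "(\<Sum>c\<in>C. (x \<bullet> (K *v c)) * (c \<bullet> (K *v d))) = (x \<bullet> (K *v d)) * (d \<bullet> (K *v d))"
        using d C(1,4) by (subst sum.remove[of _ d]) (auto intro!: sum.neutral)
      then show ?thesis using d C(3)
        by (simp add: y_def inner_diff_left inner_sum_left)
    qed
    define s where "s = sqrt (y \<bullet> (K *v y))"
    have s0: "s > 0" using pos[OF y0] by (simp add: s_def)
    define w where "w = (1/s) *\<^sub>R y"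
    have ww: "w \<bullet> (K *v w) = 1"
      using s0 pos[OF y0] by (simp add: w_def s_def matrix_vector_mult_scaleR real_sqrt_mult[symmetric] field_simps)
    have wd: "w \<bullet> (K *v d) = 0" if "d \<in> C" for d
      using yd[OF that] by (simp add: w_def)
    have dw: "d \<bullet> (K *v w) = 0" if "d \<in> C" for d
      using wd[OF that] posdef_sym_ip[OF sym, of d w] by simp
    have "span (insert w C) = span (insert x X)"
    proof (subst span_eq, intro conjI)
      have "x = s *\<^sub>R w + (\<Sum>c\<in>C. (x \<bullet> (K *v c)) *\<^sub>R c)"
        using s0 by (simp add: w_def y_def)
      moreover have "s *\<^sub>R w \<in> span (insert w C)" by (intro span_scale span_base) simp
      moreover have "(\<Sum>c\<in>C. (x \<bullet> (K *v c)) *\<^sub>R c) \<in> span (insert w C)"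
        using sC span_mono[of C "insert w C"] by auto
      ultimately have "x \<in> span (insert w C)" by (metis span_add)
      moreover have "X \<subseteq> span (insert w C)"
        using span_superset[of X] C(2) span_mono[of C "insert w C"] by auto
      ultimately show "insert x X \<subseteq> span (insert w C)" by simp
      have "y \<in> span (insert x X)"
        using sC C(2) span_mono[of X "insert x X"] unfolding y_def
        by (intro span_diff) (auto intro: span_base)
      then have "w \<in> span (insert x X)" unfolding w_def by (rule span_scale)
      moreover have "C \<subseteq> span (insert x X)"
        using span_superset[of C] C(2) span_mono[of X "insert x X"] by auto
      ultimately show "insert w C \<subseteq> span (insert x X)" by simp
    qed
    then show ?thesis using C ww wd dw
      by (intro exI[of _ "insert w C"]) auto
  qed
qed

lemma posdef_factor:
  fixes K :: "real^'n::finite^'n"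
  assumes pd: "posdef K"
  shows "\<exists>B::real^'n^'n. transpose B ** K ** B = mat 1"
proof -
  obtain C where C: "finite C" "span C = UNIV" "\<forall>c\<in>C. c \<bullet> (K *v c) = 1"
    "\<forall>c\<in>C. \<forall>d\<in>C. c \<noteq> d \<longrightarrow> c \<bullet> (K *v d) = 0"
    using gram_schmidt_K[OF pd, of Basis] by auto
  have "dim (UNIV :: (real^'n) set) \<le> card C"
    using C by (intro dim_le_card) auto
  then have "card (UNIV :: 'n set) \<le> card C" by simp
  then obtain g where g: "g ` (UNIV :: 'n set) \<subseteq> C" "inj g"
    using card_le_inj[of "UNIV :: 'n set" C] C(1) by auto
  define B :: "real^'n^'n" where "B = (\<chi> r j. g j $ r)"
  have E1: "(transpose B ** K ** B) $ i $ j = g i \<bullet> (K *v g j)" for i j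
    by (simp add: B_def matrix_matrix_mult_def matrix_vector_mult_def inner_vec_def transpose_def
        sum_distrib_left sum_distrib_right mult_ac)
      (rule sum.swap)
  have E2: "g i \<bullet> (K *v g j) = (if i = j then 1 else 0)" for i j
  proof -
    have gi: "g i \<in> C" "g j \<in> C" using g(1) by auto
    show ?thesis
    proof (cases "i = j")
      case True then show ?thesis using gi C(3) by auto
    next
      case False then have "g i \<noteq> g j" using g(2) by (auto simp: inj_eq)
      then show ?thesis using gi C(4) False by auto
    qed
  qed
  have "(transpose B ** K ** B) $ i $ j = (if i = j then 1 else 0)" for i j
    unfolding E1 by (rule E2)
  then show ?thesis by (intro exI[of _ B]) (simp add: vec_eq_iff mat_def)
qed



lemma matrix_inv_eq:
  fixes A X :: "real^'n::finite^'n"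
  assumes "A ** X = mat 1"
  shows "matrix_inv A = X"
proof -
  have XA: "X ** A = mat 1" using assms matrix_left_right_inverse by blast
  have "\<exists>A'. A ** A' = mat 1 \<and> A' ** A = mat 1" using assms XA by blast
  then have Y: "A ** matrix_inv A = mat 1 \<and> matrix_inv A ** A = mat 1"
    unfolding matrix_inv_def by (rule someI_ex)
  have "matrix_inv A = matrix_inv A ** (A ** X)" by (simp add: assms)
  also have "\<dots> = (matrix_inv A ** A) ** X" by (simp add: matrix_mul_assoc)
  also have "\<dots> = X" using Y by simp
  finally show ?thesis .
qed

lemma inner_transpose_mv:
  fixes A :: "real^'n::finite^'n"
  shows "x \<bullet> (transpose A *v y) = (A *v x) \<bullet> y"
proof -
  have "x \<bullet> (transpose A *v y) = x \<bullet> (y v* A)" by simp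
  also have "\<dots> = (y v* A) \<bullet> x" by (simp add: inner_commute)
  also have "\<dots> = y \<bullet> (A *v x)" by (simp add: dot_lmul_matrix)
  finally show ?thesis by (simp add: inner_commute)
qed

lemma gauss_repr:
  fixes K :: "real^'n::finite^'n"
  assumes pd: "posdef K"
  shows "\<exists>T R. T ** R = mat 1 \<and> R ** T = mat 1 \<and> matrix_inv K = transpose T ** T
           \<and> R ** transpose R = K \<and> det K * (det T)^2 = 1 \<and> matrix_inv K ** K = mat 1"
proof -
  obtain B :: "real^'n^'n" where B: "transpose B ** K ** B = mat 1"
    using posdef_factor[OF pd] by blast
  define T where "T = transpose B"
  have TKT: "T ** K ** transpose T = mat 1" using B by (simp add: T_def)
  have dT: "det K * (det T)^2 = 1"
    using arg_cong[OF TKT, of det] by (simp add: det_mul power2_eq_square mult_ac)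
  then have "det T \<noteq> 0" by auto
  then have "invertible T" by (simp add: invertible_det_nz)
  then obtain R where TR: "T ** R = mat 1" "R ** T = mat 1" unfolding invertible_def by blast
  have KT: "K ** transpose T = R"
  proof -
    have "R ** (T ** K ** transpose T) = R" by (simp add: TKT)
    then show ?thesis by (simp add: matrix_mul_assoc TR)
  qed
  have KTT: "K ** (transpose T ** T) = mat 1"
    by (simp add: matrix_mul_assoc KT TR)
  have inv: "matrix_inv K = transpose T ** T" by (rule matrix_inv_eq[OF KTT])
  have TR': "transpose T ** transpose R = mat 1"
    using arg_cong[OF TR(2), of transpose] by (simp add: matrix_transpose_mul)
  have "K = K ** (transpose T ** transpose R)" by (simp add: TR')
  also have "\<dots> = R ** transpose R" by (simp add: matrix_mul_assoc KT)
  finally have RR: "R ** transpose R = K" by simp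
  have "matrix_inv K ** K = mat 1" unfolding inv using KTT matrix_left_right_inverse by blast
  then show ?thesis using TR inv RR dT by blast
qed

lemma gauss_pdf_repr:
  fixes K T :: "real^'n::finite^'n"
  assumes inv: "matrix_inv K = transpose T ** T" and dT: "det K * (det T)^2 = 1"
  shows "gaussian_pdf K u = \<bar>det T\<bar> * Phi (T *v u)"
proof -
  have q: "u \<bullet> (matrix_inv K *v u) = (T *v u) \<bullet> (T *v u)"
    unfolding inv matrix_vector_mul_assoc[symmetric] by (rule inner_transpose_mv)
  have dK: "det K = 1 / (det T)^2"
  proof -
    have "(det T)^2 \<noteq> 0" using dT by auto
    then show ?thesis using dT by (simp add: field_simps)
  qed
  have dT0: "det T \<noteq> 0" using dT by auto
  have sK: "sqrt (det K) = 1 / \<bar>det T\<bar>"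
    by (simp add: dK real_sqrt_divide)
  have "sqrt ((2 * pi) ^ CARD('n) * det K) = sqrt (2*pi) ^ CARD('n) * sqrt (det K)"
    by (simp only: real_sqrt_mult real_sqrt_power)
  also have "\<dots> = sqrt (2*pi) ^ CARD('n) / \<bar>det T\<bar>" by (simp add: sK)
  finally have S: "sqrt ((2 * pi) ^ CARD('n) * det K) = sqrt (2*pi) ^ CARD('n) / \<bar>det T\<bar>" .
  show ?thesis
    unfolding gaussian_pdf_def Phi_alt q S using dT0 by (simp add: field_simps)
qed

lemma gauss_measure:
  fixes K T R :: "real^'n::finite^'n"
  assumes TR: "T ** R = mat 1" "R ** T = mat 1" and inv: "matrix_inv K = transpose T ** T"
    and dT: "det K * (det T)^2 = 1"
  shows "density lborel (gaussian_pdf K) = distr (density lborel Phi) borel (\<lambda>z. R *v z)"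
proof (rule measure_eqI)
  show "sets (density lborel (gaussian_pdf K)) = sets (distr (density lborel Phi) borel (\<lambda>z. R *v z))"
    by simp
  fix A assume "A \<in> sets (density lborel (gaussian_pdf K))"
  then have A[measurable]: "A \<in> sets borel" by simp
  have linT: "linear ((*v) T)" by (rule matrix_vector_mul_linear)
  have Tm[measurable]: "(\<lambda>z. T *v z) \<in> borel_measurable borel"
    using linear_meas[OF linT] by simp
  have Rm[measurable]: "(\<lambda>z. R *v z) \<in> borel_measurable borel"
    using linear_meas[OF matrix_vector_mul_linear[of R]] by simp
  have g: "gaussian_pdf K = (\<lambda>u. \<bar>det T\<bar> * Phi (T *v u))"
    using gauss_pdf_repr[OF inv dT] by auto
  have dT0: "det T \<noteq> 0" using dT by auto
  have RT: "\<And>u. R *v (T *v u) = u" by (simp add: matrix_vector_mul_assoc TR)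
  have hm: "(\<lambda>z. ennreal (Phi z) * indicator A (R *v z)) \<in> borel_measurable borel" by measurable
  have "emeasure (density lborel (gaussian_pdf K)) A = (\<integral>\<^sup>+u. ennreal (gaussian_pdf K u) * indicator A u \<partial>lborel)"
    unfolding g by (subst emeasure_density) auto
  also have "\<dots> = (\<integral>\<^sup>+u. (ennreal (Phi (T *v u)) * indicator A (R *v (T *v u))) * ennreal \<bar>det (matrix ((*v) T))\<bar> \<partial>lborel)"
    unfolding g RT by (intro nn_integral_cong) (simp add: ennreal_mult' mult_ac)
  also have "\<dots> = (\<integral>\<^sup>+z. ennreal (Phi z) * indicator A (R *v z) \<partial>lborel)"
    using cv_linear[OF linT _ hm] dT0 by simp
  also have "\<dots> = (\<integral>\<^sup>+z. ennreal (Phi z) * indicator ((\<lambda>z. R *v z) -` A) z \<partial>lborel)"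
    by (simp add: indicator_vimage)
  also have "\<dots> = emeasure (density lborel Phi) ((\<lambda>z. R *v z) -` A)"
    by (rule emeasure_density[symmetric]) (auto intro: measurable_sets_borel[OF Rm A])
  also have "\<dots> = emeasure (distr (density lborel Phi) borel (\<lambda>z. R *v z)) A"
    by (subst emeasure_distr) auto
  finally show "emeasure (density lborel (gaussian_pdf K)) A = emeasure (distr (density lborel Phi) borel (\<lambda>z. R *v z)) A" .
qed



lemma quad_form_sum:
  fixes A :: "real^'n::finite^'n"
  shows "u \<bullet> (A *v u) = (\<Sum>i\<in>UNIV. \<Sum>j\<in>UNIV. A$i$j * (u$i * u$j))"
  by (simp add: inner_vec_def matrix_vector_mult_def sum_distrib_left mult_ac)

lemma gauss_facts:
  fixes K :: "real^'n::finite^'n"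
  assumes pd: "posdef K"
  shows gauss_pos: "\<And>u. gaussian_pdf K u > 0"
    and gauss_meas: "gaussian_pdf K \<in> borel_measurable borel"
    and gauss_int1: "integrable lborel (gaussian_pdf K)"
    and gauss_integral1: "integral\<^sup>L lborel (gaussian_pdf K) = 1"
    and gauss_int2: "\<And>i j. integrable lborel (\<lambda>u. gaussian_pdf K u * (u$i * u$j))"
    and gauss_integral2: "\<And>i j. (\<integral>u. gaussian_pdf K u * (u$i * u$j) \<partial>lborel) = K$i$j"
    and gauss_det: "det K > 0"
    and gauss_inv: "matrix_inv K ** K = mat 1"
proof -
  obtain T R where TR: "T ** R = mat 1" "R ** T = mat 1" and inv: "matrix_inv K = transpose T ** T"
    and RR: "R ** transpose R = K" and dT: "det K * (det T)^2 = 1" and iK: "matrix_inv K ** K = mat 1"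
    using gauss_repr[OF pd] by blast
  show "matrix_inv K ** K = mat 1" by (rule iK)
  have g: "gaussian_pdf K = (\<lambda>u. \<bar>det T\<bar> * Phi (T *v u))"
    using gauss_pdf_repr[OF inv dT] by auto
  have dT0: "det T \<noteq> 0" using dT by auto
  show pos: "\<And>u. gaussian_pdf K u > 0" unfolding g using dT0 by (simp add: Phi_pos)
  have Tm[measurable]: "(\<lambda>z. T *v z) \<in> borel_measurable borel"
    using linear_meas[OF matrix_vector_mul_linear[of T]] by simp
  have Rm[measurable]: "(\<lambda>z. R *v z) \<in> borel_measurable borel"
    using linear_meas[OF matrix_vector_mul_linear[of R]] by simp
  show gm[measurable]: "gaussian_pdf K \<in> borel_measurable borel" unfolding g by measurable
  have "0 < (det T)^2" using dT0 by simp
  then show "det K > 0" using dT by (metis zero_less_mult_pos2 zero_less_one)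
  have M: "density lborel (gaussian_pdf K) = distr (density lborel Phi) borel (\<lambda>z. R *v z)"
    by (rule gauss_measure[OF TR inv dT])
  have Rm': "(\<lambda>z. R *v z) \<in> density lborel Phi \<rightarrow>\<^sub>M borel" by simp
  have tri: "integrable lborel (\<lambda>u. gaussian_pdf K u * f u) \<longleftrightarrow> integrable lborel (\<lambda>z. Phi z * f (R *v z))"
    and trI: "(\<integral>u. gaussian_pdf K u * f u \<partial>lborel) = (\<integral>z. Phi z * f (R *v z) \<partial>lborel)"
    if fm[measurable]: "f \<in> borel_measurable borel" for f :: "real^'n \<Rightarrow> real"
  proof -
    have "integrable lborel (\<lambda>u. gaussian_pdf K u * f u) \<longleftrightarrow> integrable (density lborel (gaussian_pdf K)) f"
      using pos by (subst integrable_density) (auto intro: less_imp_le)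
    also have "\<dots> \<longleftrightarrow> integrable (density lborel Phi) (\<lambda>z. f (R *v z))"
      unfolding M by (rule integrable_distr_eq[OF Rm' fm])
    also have "\<dots> \<longleftrightarrow> integrable lborel (\<lambda>z. Phi z * f (R *v z))"
      using Phi_pos by (subst integrable_density) (auto intro: less_imp_le)
    finally show "integrable lborel (\<lambda>u. gaussian_pdf K u * f u) \<longleftrightarrow> integrable lborel (\<lambda>z. Phi z * f (R *v z))" .
    have "(\<integral>u. gaussian_pdf K u * f u \<partial>lborel) = integral\<^sup>L (density lborel (gaussian_pdf K)) f"
      using pos by (subst integral_density) (auto intro: less_imp_le)
    also have "\<dots> = integral\<^sup>L (density lborel Phi) (\<lambda>z. f (R *v z))"
      unfolding M by (rule integral_distr[OF Rm' fm])
    also have "\<dots> = (\<integral>z. Phi z * f (R *v z) \<partial>lborel)"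
      using Phi_pos by (subst integral_density) (auto intro: less_imp_le)
    finally show "(\<integral>u. gaussian_pdf K u * f u \<partial>lborel) = (\<integral>z. Phi z * f (R *v z) \<partial>lborel)" .
  qed
  show "integrable lborel (gaussian_pdf K)"
    using tri[of "\<lambda>_. 1"] Phi_integrable by simp
  show "integral\<^sup>L lborel (gaussian_pdf K) = 1"
    using trI[of "\<lambda>_. 1"] Phi_integral by simp
  fix i j
  have ex: "Phi z * ((R *v z)$i * (R *v z)$j) = (\<Sum>k\<in>UNIV. \<Sum>l\<in>UNIV. (R$j$k * R$i$l) * (Phi z * (z$k * z$l)))" for z
    by (simp add: matrix_vector_mult_def sum_product sum_distrib_left mult_ac)
  have "integrable lborel (\<lambda>z. \<Sum>k\<in>UNIV. \<Sum>l\<in>UNIV. (R$j$k * R$i$l) * (Phi z * (z$k * z$l)))"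
    by (intro Bochner_Integration.integrable_sum integrable_mult_right Phi_moment2(1))
  then show "integrable lborel (\<lambda>u. gaussian_pdf K u * (u$i * u$j))"
    by (subst tri) (auto simp: ex)
  have "(\<integral>u. gaussian_pdf K u * (u$i * u$j) \<partial>lborel) = (\<integral>z. (\<Sum>k\<in>UNIV. \<Sum>l\<in>UNIV. (R$j$k * R$i$l) * (Phi z * (z$k * z$l))) \<partial>lborel)"
    by (subst trI) (auto simp: ex)
  also have "\<dots> = (\<Sum>k\<in>UNIV. \<Sum>l\<in>UNIV. (R$j$k * R$i$l) * (if k = l then 1 else 0))"
    by (simp add: Bochner_Integration.integral_sum Bochner_Integration.integrable_sum Phi_moment2)
  also have "\<dots> = (\<Sum>k\<in>UNIV. R$i$k * R$j$k)"
  proof (rule sum.cong[OF refl])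
    fix k
    have "(\<Sum>l\<in>UNIV. (R$j$k * R$i$l) * (if k = l then 1 else 0)) = (\<Sum>l\<in>UNIV. if l = k then R$j$k * R$i$l else 0)"
      by (rule sum.cong) auto
    also have "\<dots> = R$j$k * R$i$k" by simp
    finally show "(\<Sum>l\<in>UNIV. (R$j$k * R$i$l) * (if k = l then 1 else 0)) = R$i$k * R$j$k" by simp
  qed
  also have "\<dots> = (R ** transpose R) $ i $ j"
    by (simp add: matrix_matrix_mult_def transpose_def)
  finally show "(\<integral>u. gaussian_pdf K u * (u$i * u$j) \<partial>lborel) = K$i$j" using RR by simp
qed



lemma sum_trace:
  fixes D K :: "real^'n::finite^'n"
  assumes "transpose K = K"
  shows "(\<Sum>i\<in>UNIV. \<Sum>j\<in>UNIV. D$i$j * K$i$j) = trace (D ** K)"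
proof -
  have "\<And>i j. K$j$i = K$i$j" using assms by (metis transpose_def vec_lambda_beta)
  then show ?thesis by (simp add: trace_def matrix_matrix_mult_def)
qed

lemma gauss_ent:
  fixes K D :: "real^'n::finite^'n"
  assumes pd: "posdef K"
  shows "integrable lborel (ent_integrand D (gaussian_pdf K))"
    and "integral\<^sup>L lborel (ent_integrand D (gaussian_pdf K))
         = (1/2) * (- trace (D ** K) + ln (det K)) + real CARD('n) / 2 * (1 + ln (2*pi))"
proof -
  note F = gauss_facts[OF pd]
  have sym: "transpose K = K" using pd by (simp add: posdef_def)
  define M where "M = matrix_inv K"
  define c where "c = sqrt ((2 * pi) ^ CARD('n) * det K)"
  have c0: "c > 0" using F(7) by (simp add: c_def)
  define x where "x i j u = gaussian_pdf K u * (u$i * u$j)" for i j and u :: "real^'n"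
  have lng: "ln (gaussian_pdf K u) = -(1/2) * (u \<bullet> (M *v u)) - ln c" for u
  proof -
    have gK: "gaussian_pdf K u = exp (-(1/2) * (u \<bullet> (M *v u))) / c"
      by (simp add: gaussian_pdf_def M_def c_def)
    show ?thesis unfolding gK using c0 by (simp add: ln_div)
  qed
  have e: "ent_integrand D (gaussian_pdf K) u =
      (-(1/2)) * (\<Sum>i\<in>UNIV. \<Sum>j\<in>UNIV. D$i$j * x i j u) + (1/2) * (\<Sum>i\<in>UNIV. \<Sum>j\<in>UNIV. M$i$j * x i j u)
      + ln c * gaussian_pdf K u" for u
  proof -
    have a: "(\<Sum>i\<in>UNIV. \<Sum>j\<in>UNIV. A$i$j * x i j u) = gaussian_pdf K u * (u \<bullet> (A *v u))" for A :: "real^'n^'n"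
      by (simp add: quad_form_sum x_def sum_distrib_left mult_ac)
    show ?thesis unfolding a ent_integrand_def lng by (simp add: algebra_simps)
  qed
  have ix: "integrable lborel (x i j)" for i j unfolding x_def by (rule F(5))
  have Ix: "integral\<^sup>L lborel (x i j) = K$i$j" for i j unfolding x_def by (rule F(6))
  show "integrable lborel (ent_integrand D (gaussian_pdf K))"
    unfolding e by (intro Bochner_Integration.integrable_add integrable_mult_right Bochner_Integration.integrable_sum ix F(3))
  have "integral\<^sup>L lborel (ent_integrand D (gaussian_pdf K)) =
      (-(1/2)) * (\<Sum>i\<in>UNIV. \<Sum>j\<in>UNIV. D$i$j * K$i$j) + (1/2) * (\<Sum>i\<in>UNIV. \<Sum>j\<in>UNIV. M$i$j * K$i$j) + ln c"
    unfolding e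
    by (simp add: Bochner_Integration.integral_add Bochner_Integration.integrable_add Bochner_Integration.integral_sum Bochner_Integration.integrable_sum ix Ix F(3) F(4))
  also have "(\<Sum>i\<in>UNIV. \<Sum>j\<in>UNIV. D$i$j * K$i$j) = trace (D ** K)" by (rule sum_trace[OF sym])
  also have "(\<Sum>i\<in>UNIV. \<Sum>j\<in>UNIV. M$i$j * K$i$j) = trace (M ** K)" by (rule sum_trace[OF sym])
  also have "trace (M ** K) = real CARD('n)"
    using F(8) by (simp add: M_def trace_def mat_def)
  also have "ln c = (1/2) * (real CARD('n) * ln (2*pi) + ln (det K))"
    using F(7) by (simp add: c_def ln_sqrt ln_mult ln_realpow distrib_left distrib_right)
  finally show "integral\<^sup>L lborel (ent_integrand D (gaussian_pdf K))
         = (1/2) * (- trace (D ** K) + ln (det K)) + real CARD('n) / 2 * (1 + ln (2*pi))"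
    by (simp add: algebra_simps)
qed

lemma pair_prod:
  fixes f g :: "real^'n::finite \<Rightarrow> real"
  assumes f: "integrable lborel f" and g: "integrable lborel g"
  shows "integrable (lborel \<Otimes>\<^sub>M lborel) (\<lambda>(u,v). f u * g v)"
    and "(\<integral>(u,v). f u * g v \<partial>(lborel \<Otimes>\<^sub>M lborel)) = integral\<^sup>L lborel f * integral\<^sup>L lborel g"
proof -
  have PS: "pair_sigma_finite (lborel :: (real^'n) measure) (lborel :: (real^'n) measure)"
    by (rule pair_sigma_finite.intro) (rule lborel.sigma_finite_measure_axioms)+
  have [measurable]: "f \<in> borel_measurable borel" "g \<in> borel_measurable borel"
    using f g by (auto dest: borel_measurable_integrable)
  show I: "integrable (lborel \<Otimes>\<^sub>M lborel) (\<lambda>(u,v). f u * g v)"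
  proof (rule pair_sigma_finite.Fubini_integrable[OF PS])
    show "(\<lambda>(u,v). f u * g v) \<in> borel_measurable (lborel \<Otimes>\<^sub>M lborel)" by measurable
    show "integrable lborel (\<lambda>x. \<integral>y. norm ((\<lambda>(u,v). f u * g v) (x, y)) \<partial>lborel)"
      using f by (simp add: abs_mult)
    show "AE x in lborel. integrable lborel (\<lambda>y. (\<lambda>(u,v). f u * g v) (x, y))"
      using g by simp
  qed
  have "(\<integral>(u,v). f u * g v \<partial>(lborel \<Otimes>\<^sub>M lborel)) = (\<integral>x. (\<integral>y. f x * g y \<partial>lborel) \<partial>lborel)"
    using pair_sigma_finite.integral_fst'[OF PS I] by simp
  also have "\<dots> = integral\<^sup>L lborel f * integral\<^sup>L lborel g" by simp
  finally show "(\<integral>(u,v). f u * g v \<partial>(lborel \<Otimes>\<^sub>M lborel)) = integral\<^sup>L lborel f * integral\<^sup>L lborel g" .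
qed



theorem corollary1:
  fixes lam :: real
    and KU0 KV0 Sigma1 Sigma2 A B W1 W2 DU DV KU KV :: "real^'n^'n"
    and q :: "(real^'n) \<times> (real^'n) \<Rightarrow> real"
  assumes "lam > 1"
    and "posdef KU0" and "posdef KV0" and "posdef Sigma1" and "posdef Sigma2"
    and "KU0 + KV0 = mat 1"
    and "A = KV0 ** matrix_inv (mat 1 + Sigma2)"
    and "W1 = KV0 - KV0 ** matrix_inv (mat 1 + Sigma2) ** KV0"
    and "B = KU0 ** matrix_inv (KU0 + Sigma1)"
    and "W2 = KU0 - KU0 ** matrix_inv (KU0 + Sigma1) ** KU0"
    and "DU = matrix_inv W2 - matrix_inv W2 ** B - transpose B ** matrix_inv W2
              + transpose B ** matrix_inv W2 ** B"
    and "DV = matrix_inv W1 - transpose A ** matrix_inv W1 - matrix_inv W1 ** A"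
    and "optimalP DU DV lam q"
    and "posdef KU" and "posdef KV" and "KU + KV = mat 1"
    and "AE u in lborel. margU q u = gaussian_pdf KU u"
    and "AE v in lborel. margV q v = gaussian_pdf KV v"
  shows "posdef KU \<and> posdef (mat 1 - KU)
         \<and> (\<forall>K. posdef K \<and> posdef (mat 1 - K) \<longrightarrow> objK DU DV lam K \<le> objK DU DV lam KU)"
proof -
  have KV: "KV = mat 1 - KU" using assms(16) by (metis add_diff_cancel_left')
  define C where "C = real CARD('n) / 2 * (1 + ln (2*pi))"
  have ent: "integral\<^sup>L lborel (ent_integrand D (gaussian_pdf K))
         = (1/2) * (- trace (D ** K) + ln (det K)) + C" if "posdef K" for D K :: "real^'n^'n"
    using gauss_ent(2)[OF that] by (simp add: C_def)
  have optq: "optimalP DU DV lam q" by fact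
  then have fq: "feasibleP DU DV q" by (simp add: optimalP_def)
  have objq: "objP DU DV lam q = ((1/2) * (- trace (DU ** KU) + ln (det KU)) + C)
       + lam * ((1/2) * (- trace (DV ** KV) + ln (det KV)) + C)"
  proof -
    have "integrable lborel (ent_integrand DU (margU q))" using fq by (simp add: feasibleP_def)
    then have mU: "ent_integrand DU (margU q) \<in> borel_measurable lborel" by (rule borel_measurable_integrable)
    have "integrable lborel (ent_integrand DV (margV q))" using fq by (simp add: feasibleP_def)
    then have mV: "ent_integrand DV (margV q) \<in> borel_measurable lborel" by (rule borel_measurable_integrable)
    have gU: "ent_integrand DU (gaussian_pdf KU) \<in> borel_measurable lborel"
      using gauss_ent(1)[OF assms(14)] by (rule borel_measurable_integrable)
    have gV: "ent_integrand DV (gaussian_pdf KV) \<in> borel_measurable lborel"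
      using gauss_ent(1)[OF assms(15)] by (rule borel_measurable_integrable)
    have aU: "AE u in lborel. ent_integrand DU (margU q) u = ent_integrand DU (gaussian_pdf KU) u"
      using assms(17) by eventually_elim (simp add: ent_integrand_def)
    have aV: "AE u in lborel. ent_integrand DV (margV q) u = ent_integrand DV (gaussian_pdf KV) u"
      using assms(18) by eventually_elim (simp add: ent_integrand_def)
    have "integral\<^sup>L lborel (ent_integrand DU (margU q)) = integral\<^sup>L lborel (ent_integrand DU (gaussian_pdf KU))"
      by (rule integral_cong_AE[OF mU gU aU])
    moreover have "integral\<^sup>L lborel (ent_integrand DV (margV q)) = integral\<^sup>L lborel (ent_integrand DV (gaussian_pdf KV))"
      by (rule integral_cong_AE[OF mV gV aV])
    ultimately show ?thesis
      unfolding objP_def using ent[OF assms(14)] ent[OF assms(15)] by simp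
  qed
  show ?thesis
  proof (intro conjI allI impI)
    show "posdef KU" by fact
    show "posdef (mat 1 - KU)" using assms(15) KV by simp
    fix K :: "real^'n^'n" assume "posdef K \<and> posdef (mat 1 - K)"
    then have pK: "posdef K" and pL: "posdef (mat 1 - K)" by auto
    define L where "L = mat 1 - K"
    have pL': "posdef L" using pL by (simp add: L_def)
    note FK = gauss_facts[OF pK] and FL = gauss_facts[OF pL']
    note [measurable] = FK(2) FL(2)
    define q' where "q' = (\<lambda>(u,v). gaussian_pdf K u * gaussian_pdf L v)"
    have mU: "margU q' = gaussian_pdf K"
      by (rule ext) (simp add: margU_def q'_def FL(4))
    have mV: "margV q' = gaussian_pdf L"
      by (rule ext) (simp add: margV_def q'_def FK(4))
    have jp: "joint_pdf q'"
      unfolding joint_pdf_def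
    proof (intro conjI allI)
      show "q' \<in> borel_measurable (lborel \<Otimes>\<^sub>M lborel)" unfolding q'_def by measurable
      show "0 \<le> q' x" for x using FK(1) FL(1) by (auto simp: q'_def less_imp_le split: prod.splits)
      show "integrable (lborel \<Otimes>\<^sub>M lborel) q'" unfolding q'_def by (rule pair_prod(1)[OF FK(3) FL(3)])
      show "integral\<^sup>L (lborel \<Otimes>\<^sub>M lborel) q' = 1" unfolding q'_def
        using pair_prod(2)[OF FK(3) FL(3)] FK(4) FL(4) by simp
    qed
    have mom: "integrable (lborel \<Otimes>\<^sub>M lborel) (\<lambda>(u,v). q' (u,v) * (u$i * u$j + v$i * v$j))
        \<and> (\<integral>(u,v). q' (u,v) * (u$i * u$j + v$i * v$j) \<partial>(lborel \<Otimes>\<^sub>M lborel)) = (if i = j then 1 else 0)" for i j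
    proof -
      have eq: "(\<lambda>(u,v). q' (u,v) * (u$i * u$j + v$i * v$j)) =
          (\<lambda>p. (\<lambda>(u,v). (gaussian_pdf K u * (u$i * u$j)) * gaussian_pdf L v) p
             + (\<lambda>(u,v). gaussian_pdf K u * (gaussian_pdf L v * (v$i * v$j))) p)"
        by (auto simp: q'_def fun_eq_iff algebra_simps)
      have i1: "integrable (lborel \<Otimes>\<^sub>M lborel) (\<lambda>(u,v). (gaussian_pdf K u * (u$i * u$j)) * gaussian_pdf L v)"
        by (rule pair_prod(1)[OF FK(5) FL(3)])
      have i2: "integrable (lborel \<Otimes>\<^sub>M lborel) (\<lambda>(u,v). gaussian_pdf K u * (gaussian_pdf L v * (v$i * v$j)))"
        by (rule pair_prod(1)[OF FK(3) FL(5)])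
      have I1: "(\<integral>(u,v). (gaussian_pdf K u * (u$i * u$j)) * gaussian_pdf L v \<partial>(lborel \<Otimes>\<^sub>M lborel)) = K$i$j"
        using pair_prod(2)[OF FK(5) FL(3)] FK(6) FL(4) by simp
      have I2: "(\<integral>(u,v). gaussian_pdf K u * (gaussian_pdf L v * (v$i * v$j)) \<partial>(lborel \<Otimes>\<^sub>M lborel)) = L$i$j"
        using pair_prod(2)[OF FK(3) FL(5)] FK(4) FL(6) by simp
      have "K$i$j + L$i$j = (if i = j then 1 else 0)" by (simp add: L_def mat_def)
      then show ?thesis
        unfolding eq using i1 i2 I1 I2 by (simp add: Bochner_Integration.integral_add)
    qed
    have fq': "feasibleP DU DV q'"
      unfolding feasibleP_def mU mV using jp mom gauss_ent(1)[OF pK] gauss_ent(1)[OF pL'] by blast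
    have "objP DU DV lam q' \<le> objP DU DV lam q" using optq fq' by (simp add: optimalP_def)
    moreover have "objP DU DV lam q' = ((1/2) * (- trace (DU ** K) + ln (det K)) + C)
       + lam * ((1/2) * (- trace (DV ** L) + ln (det L)) + C)"
      unfolding objP_def mU mV using ent[OF pK] ent[OF pL'] by simp
    ultimately have "(1/2) * objK DU DV lam K \<le> (1/2) * objK DU DV lam KU"
      unfolding objq objK_def L_def KV by (simp add: algebra_simps)
    then show "objK DU DV lam K \<le> objK DU DV lam KU" by simp
  qed
qed


end
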